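(* Let $V_1\subseteq\mathbb{F}[\mathbf{y}]$ and $V_2\subseteq\mathbb{F}[\mathbf{z}]$ be finite-dimensional vector spaces of polynomials over disjoint sets of variables $\mathbf{y},\mathbf{z}$. Suppose $\mathrm{wt}_1:\mathbf{y}\to\mathbb{N}^k$ and $\mathrm{wt}_2:\mathbf{z}\to\mathbb{N}^k$ are BIWAs for $V_1$ and $V_2$ isolating bases (monomial index sets) $B_1$ and $B_2$ respectively, and let $w:\mathbf{y}\cup\mathbf{z}\to\mathbb{N}$ be a weight assignment that separates $B_1\cdot B_2=\{m_1m_2:m_1\in B_1,m_2\in B_2\}$. Define $\mathrm{wt}:\mathbf{y}\cup\mathbf{z}\to\mathbb{N}^{k+1}$ by $\mathrm{wt}(y_i)=(\mathrm{wt}_1(y_i),w(y_i))$ for $y_i\in\mathbf{y}$ and $\mathrm{wt}(z_i)=(\mathrm{wt}_2(z_i),w(z_i))$ for $z_i\in\mathbf{z}$. Then $\mathrm{wt}$ is a BIWA for $V_1\cdot V_2=\operatorname{span}\{fg:f\in V_1,g\in V_2\}$ (isolating $B_1\cdot B_2$).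
   Context: A weight assignment $\mathrm{wt}:\mathbf{y}\to\mathbb{N}^k$ is extended to monomials additively: $\mathrm{wt}(\prod_i y_i^{e_i})=\sum_ie_i\,\mathrm{wt}(y_i)$. A weight assignment separates a set $S$ of monomials if distinct monomials in $S$ get distinct weights. For a finite-dimensional space $V$ of polynomials, regard $V$ as a matrix whose rows are coefficient vectors of a spanning set and whose columns are indexed by monomials; $V_m$ is the column of monomial $m$. $\mathrm{wt}$ is a BIWA for $V$ isolating $B$ if $B$ is a set of monomials whose columns form a basis of the column space, distinct elements of $B$ have distinct weights, and for every monomial $m\notin B$, $V_m\in\operatorname{span}\{V_{m'}:m'\in B,\ \mathrm{wt}(m')\prec\mathrm{wt}(m)\}$, with $\prec$ the lexicographic order. *)

theory Defs
  imports Main "HOL-Library.Poly_Mapping"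
begin

(* Monomial product is addition
  of exponent vectors; polynomial product is the convolution of Poly_Mapping. *)

type_synonym ('v, 'a) mpoly = "('v \<Rightarrow>\<^sub>0 nat) \<Rightarrow>\<^sub>0 'a"

definition pspan :: "('v, 'a::field) mpoly set \<Rightarrow> ('v, 'a) mpoly set" where
  "pspan S = {p. \<exists>F c. finite F \<and> F \<subseteq> S \<and>
      p = (\<Sum>f\<in>F. Poly_Mapping.map (\<lambda>x. c f * x) f)}"

(* Vectors in N^n are encoded as functions nat => nat, of which only
  the coordinates 0..<n are relevant. Weight of a monomial (additive extension). *)
definition mwt :: "('v \<Rightarrow> nat \<Rightarrow> nat) \<Rightarrow> ('v \<Rightarrow>\<^sub>0 nat) \<Rightarrow> nat \<Rightarrow> nat" where
  "mwt wt m = (\<lambda>j. \<Sum>v\<in>Poly_Mapping.keys m. Poly_Mapping.lookup m v * wt v j)"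

definition lexless :: "nat \<Rightarrow> (nat \<Rightarrow> nat) \<Rightarrow> (nat \<Rightarrow> nat) \<Rightarrow> bool" where
  "lexless n a b \<longleftrightarrow> (\<exists>i<n. (\<forall>j<i. a j = b j) \<and> a i < b i)"

definition veq :: "nat \<Rightarrow> (nat \<Rightarrow> nat) \<Rightarrow> (nat \<Rightarrow> nat) \<Rightarrow> bool" where
  "veq n a b \<longleftrightarrow> (\<forall>j<n. a j = b j)"

definition separates :: "nat \<Rightarrow> ('v \<Rightarrow> nat \<Rightarrow> nat) \<Rightarrow> ('v \<Rightarrow>\<^sub>0 nat) set \<Rightarrow> bool" where
  "separates n wt S \<longleftrightarrow>
     (\<forall>m\<in>S. \<forall>m'\<in>S. m \<noteq> m' \<longrightarrow> \<not> veq n (mwt wt m) (mwt wt m'))"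

(* Column V_m of the space V is the linear functional f |-> coefficient of m in f.
  Column V_m lies in the span of the columns {V_m' : m'  in  S} (S finite). *)
definition col_in_span :: "('v, 'a::field) mpoly set \<Rightarrow> ('v \<Rightarrow>\<^sub>0 nat) \<Rightarrow> ('v \<Rightarrow>\<^sub>0 nat) set \<Rightarrow> bool" where
  "col_in_span V m S \<longleftrightarrow>
     (\<exists>c. \<forall>f\<in>V. Poly_Mapping.lookup f m = (\<Sum>m'\<in>S. c m' * Poly_Mapping.lookup f m'))"

definition cols_indep :: "('v, 'a::field) mpoly set \<Rightarrow> ('v \<Rightarrow>\<^sub>0 nat) set \<Rightarrow> bool" where
  "cols_indep V B \<longleftrightarrow>
     (\<forall>c. (\<forall>f\<in>V. (\<Sum>m\<in>B. c m * Poly_Mapping.lookup f m) = 0) \<longrightarrow> (\<forall>m\<in>B. c m = 0))"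

definition cols_basis :: "('v, 'a::field) mpoly set \<Rightarrow> ('v \<Rightarrow>\<^sub>0 nat) set \<Rightarrow> bool" where
  "cols_basis V B \<longleftrightarrow> finite B \<and> cols_indep V B \<and> (\<forall>m. col_in_span V m B)"

definition BIWA :: "nat \<Rightarrow> ('v \<Rightarrow> nat \<Rightarrow> nat) \<Rightarrow> ('v, 'a::field) mpoly set \<Rightarrow> ('v \<Rightarrow>\<^sub>0 nat) set \<Rightarrow> bool" where
  "BIWA n wt V B \<longleftrightarrow>
     cols_basis V B \<and> separates n wt B \<and>
     (\<forall>m. m \<notin> B \<longrightarrow>
        col_in_span V m {m'\<in>B. lexless n (mwt wt m') (mwt wt m)})"

end

theory Submission
  imports Defs
begin


lemma lookup_map_mult: "Poly_Mapping.lookup (Poly_Mapping.map (\<lambda>x. c * x) f) m = (c::'a::field) * Poly_Mapping.lookup f m"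
  by (simp add: Poly_Mapping.map.rep_eq when_def)

lemma pspan_lin:
  fixes S :: "('v, 'a::field) mpoly set"
  assumes "\<forall>p\<in>S. (\<Sum>m\<in>T. c m * Poly_Mapping.lookup p m) = (\<Sum>m\<in>U. d m * Poly_Mapping.lookup p m)"
  shows "\<forall>p\<in>pspan S. (\<Sum>m\<in>T. c m * Poly_Mapping.lookup p m) = (\<Sum>m\<in>U. d m * Poly_Mapping.lookup p m)"
proof
  fix p assume "p \<in> pspan S"
  then obtain F e where F: "finite F" "F \<subseteq> S" and p: "p = (\<Sum>f\<in>F. Poly_Mapping.map (\<lambda>x. e f * x) f)"
    unfolding pspan_def by blast
  have gen: "(\<Sum>m\<in>X. h m * Poly_Mapping.lookup p m) = (\<Sum>f\<in>F. e f * (\<Sum>m\<in>X. h m * Poly_Mapping.lookup f m))" for X h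
    unfolding p lookup_sum lookup_map_mult
    by (simp add: sum_distrib_left mult_ac) (rule sum.swap)
  show "(\<Sum>m\<in>T. c m * Poly_Mapping.lookup p m) = (\<Sum>m\<in>U. d m * Poly_Mapping.lookup p m)"
    unfolding gen using assms F by (intro sum.cong) auto
qed

lemma pspan_sup: "p \<in> S \<Longrightarrow> p \<in> pspan (S :: ('v, 'a::field) mpoly set)"
  unfolding pspan_def
  by (rule CollectI, rule exI[of _ "{p}"], rule exI[of _ "\<lambda>_. 1"])
     (auto intro!: poly_mapping_eqI simp: lookup_map_mult)

lemma pspan_zero:
  fixes S :: "('v, 'a::field) mpoly set"
  assumes "\<forall>p\<in>S. Poly_Mapping.lookup p m = 0" "q \<in> pspan S"
  shows "Poly_Mapping.lookup q m = 0"
  using pspan_lin[where S=S and T="{m}" and c="\<lambda>_. 1" and U="{}" and d="\<lambda>_. 0"] assms by auto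

lemma decomp_unique:
  assumes "Y \<inter> Z = {}" "Poly_Mapping.keys a \<subseteq> Y" "Poly_Mapping.keys a' \<subseteq> Y" "Poly_Mapping.keys b \<subseteq> Z" "Poly_Mapping.keys b' \<subseteq> Z"
    "a + b = a' + (b' :: 'v \<Rightarrow>\<^sub>0 nat)"
  shows "a = a' \<and> b = b'"
proof -
  have "Poly_Mapping.lookup a v = Poly_Mapping.lookup a' v \<and> Poly_Mapping.lookup b v = Poly_Mapping.lookup b' v" for v
  proof -
    have e: "Poly_Mapping.lookup a v + Poly_Mapping.lookup b v = Poly_Mapping.lookup a' v + Poly_Mapping.lookup b' v"
      using assms(6) by (metis lookup_add)
    show ?thesis
    proof (cases "v \<in> Y")
      case True
      then have "v \<notin> Poly_Mapping.keys b" "v \<notin> Poly_Mapping.keys b'" using assms by auto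
      then show ?thesis using e by (simp add: in_keys_iff)
    next
      case False
      then have "v \<notin> Poly_Mapping.keys a" "v \<notin> Poly_Mapping.keys a'" using assms by auto
      then show ?thesis using e by (simp add: in_keys_iff)
    qed
  qed
  then show ?thesis by (auto intro: poly_mapping_eqI)
qed

lemma prod_coeff:
  fixes f g :: "('v, 'a::field) mpoly"
  assumes disj: "Y \<inter> Z = {}"
    and f: "\<And>m. \<not> Poly_Mapping.keys m \<subseteq> Y \<Longrightarrow> Poly_Mapping.lookup f m = 0"
    and g: "\<And>m. \<not> Poly_Mapping.keys m \<subseteq> Z \<Longrightarrow> Poly_Mapping.lookup g m = 0"
  shows "Poly_Mapping.keys a \<subseteq> Y \<Longrightarrow> Poly_Mapping.keys b \<subseteq> Z \<Longrightarrow> Poly_Mapping.lookup (f * g) (a + b) = Poly_Mapping.lookup f a * Poly_Mapping.lookup g b"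
    and "\<not> (\<exists>a b. m = a + b \<and> Poly_Mapping.keys a \<subseteq> Y \<and> Poly_Mapping.keys b \<subseteq> Z) \<Longrightarrow> Poly_Mapping.lookup (f * g) m = 0"
proof -
  assume a: "Poly_Mapping.keys a \<subseteq> Y" and b: "Poly_Mapping.keys b \<subseteq> Z"
  have h: "(\<lambda>l. Poly_Mapping.lookup f l * (\<Sum>q. Poly_Mapping.lookup g q when a + b = l + q)) = (\<lambda>l. (Poly_Mapping.lookup f a * Poly_Mapping.lookup g b) when l = a)"
  proof
    fix l
    show "Poly_Mapping.lookup f l * (\<Sum>q. Poly_Mapping.lookup g q when a + b = l + q) = (Poly_Mapping.lookup f a * Poly_Mapping.lookup g b when l = a)"
    proof (cases "l = a")
      case True
      then show ?thesis by simp
    next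
      case False
      show ?thesis
      proof (cases "Poly_Mapping.keys l \<subseteq> Y")
        case True
        have "(\<lambda>q. Poly_Mapping.lookup g q when a + b = l + q) = (\<lambda>q. 0)"
        proof
          fix q
          show "(Poly_Mapping.lookup g q when a + b = l + q) = 0"
            using decomp_unique[OF disj a True b, of q] g[of q] False by (auto simp: when_def)
        qed
        then have "(\<Sum>q. Poly_Mapping.lookup g q when a + b = l + q) = 0" by (simp only: Sum_any.neutral)
        then show ?thesis using False by simp
      next
        case False
        then show ?thesis using f \<open>l \<noteq> a\<close> by simp
      qed
    qed
  qed
  show "Poly_Mapping.lookup (f * g) (a + b) = Poly_Mapping.lookup f a * Poly_Mapping.lookup g b"
    unfolding lookup_mult h by (rule Sum_any_when_equal)
next
  assume nd: "\<not> (\<exists>a b. m = a + b \<and> Poly_Mapping.keys a \<subseteq> Y \<and> Poly_Mapping.keys b \<subseteq> Z)"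
  have h: "(\<lambda>l. Poly_Mapping.lookup f l * (\<Sum>q. Poly_Mapping.lookup g q when m = l + q)) = (\<lambda>l. 0)"
  proof
    fix l
    have "(\<Sum>q. Poly_Mapping.lookup g q when m = l + q) = 0" if "Poly_Mapping.keys l \<subseteq> Y"
    proof -
      have "(\<lambda>q. Poly_Mapping.lookup g q when m = l + q) = (\<lambda>q. 0)"
      proof
        fix q show "(Poly_Mapping.lookup g q when m = l + q) = 0"
          using nd that g[of q] by (auto simp: when_def)
      qed
      then show ?thesis by (simp only: Sum_any.neutral)
    qed
    then show "Poly_Mapping.lookup f l * (\<Sum>q. Poly_Mapping.lookup g q when m = l + q) = 0"
      using f[of l] by (cases "Poly_Mapping.keys l \<subseteq> Y") auto
  qed
  show "Poly_Mapping.lookup (f * g) m = 0" unfolding lookup_mult h by (rule Sum_any.neutral)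
qed

lemma mwt_add: "mwt wt (a + b) j = mwt wt a j + mwt wt b j"
proof -
  have sup: "finite K \<Longrightarrow> Poly_Mapping.keys m \<subseteq> K \<Longrightarrow> mwt wt m j = (\<Sum>v\<in>K. Poly_Mapping.lookup m v * wt v j)" for K m
    unfolding mwt_def by (rule sum.mono_neutral_left) (auto simp: in_keys_iff)
  let ?K = "Poly_Mapping.keys a \<union> Poly_Mapping.keys b"
  have "mwt wt (a + b) j = (\<Sum>v\<in>?K. Poly_Mapping.lookup (a+b) v * wt v j)"
    by (rule sup) (auto dest: subsetD[OF keys_add])
  also have "\<dots> = (\<Sum>v\<in>?K. Poly_Mapping.lookup a v * wt v j) + (\<Sum>v\<in>?K. Poly_Mapping.lookup b v * wt v j)"
    by (simp add: lookup_add algebra_simps sum.distrib)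
  also have "\<dots> = mwt wt a j + mwt wt b j"
    using sup[of ?K a] sup[of ?K b] by auto
  finally show ?thesis .
qed

lemma lex_add2:
  assumes "lexless n x x'" "lexless n y y'"
  shows "lexless n (\<lambda>j. x j + y j) (\<lambda>j. x' j + y' j)"
proof -
  obtain i1 where i1: "i1 < n" "\<forall>j<i1. x j = x' j" "x i1 < x' i1" using assms(1) unfolding lexless_def by blast
  obtain i2 where i2: "i2 < n" "\<forall>j<i2. y j = y' j" "y i2 < y' i2" using assms(2) unfolding lexless_def by blast
  show ?thesis
  proof (cases "i1 \<le> i2")
    case True
    then have "y i1 \<le> y' i1" using i2 by (cases "i1 = i2") auto
    then show ?thesis unfolding lexless_def using i1 i2 True
      by (intro exI[of _ i1]) auto
  next
    case False
    then show ?thesis unfolding lexless_def using i1 i2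
      by (intro exI[of _ i2]) auto
  qed
qed

lemma lex_add1:
  assumes "lexless n x x'"
  shows "lexless n (\<lambda>j. x j + y j) (\<lambda>j. x' j + y j)"
  using assms unfolding lexless_def by auto

lemma lex_add1':
  assumes "lexless n y y'"
  shows "lexless n (\<lambda>j. x j + y j) (\<lambda>j. x j + y' j)"
  using assms unfolding lexless_def by auto

lemma col_mono:
  assumes "col_in_span V m S" "S \<subseteq> T" "finite T"
  shows "col_in_span V m T"
proof -
  obtain c where c: "\<forall>f\<in>V. Poly_Mapping.lookup f m = (\<Sum>m'\<in>S. c m' * Poly_Mapping.lookup f m')"
    using assms(1) unfolding col_in_span_def by blast
  have eq: "(\<Sum>m'\<in>T. (if m' \<in> S then c m' else 0) * Poly_Mapping.lookup f m') = (\<Sum>m'\<in>S. c m' * Poly_Mapping.lookup f m')" for f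
  proof -
    have "(\<Sum>m'\<in>T. (if m' \<in> S then c m' else 0) * Poly_Mapping.lookup f m') = (\<Sum>m'\<in>T. if m' \<in> S then c m' * Poly_Mapping.lookup f m' else 0)"
      by (rule sum.cong) auto
    also have "\<dots> = (\<Sum>m'\<in>{x\<in>T. x \<in> S}. c m' * Poly_Mapping.lookup f m')"
      using assms(3) by (rule sum.inter_filter[symmetric])
    also have "{x\<in>T. x \<in> S} = S" using assms(2) by auto
    finally show ?thesis .
  qed
  then show ?thesis unfolding col_in_span_def
    by (intro exI[of _ "\<lambda>m'. if m' \<in> S then c m' else 0"] ballI) (simp add: c)
qed

lemma col_self:
  assumes "m \<in> T" "finite T"
  shows "col_in_span V m T"
proof -
  have e: "(if m' = m then 1 else 0) * x = (if m' = m then x else 0)" for m' and x :: "'b::field" by simp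
  show ?thesis unfolding col_in_span_def
    by (rule exI[of _ "\<lambda>m'. if m' = m then 1 else 0"]) (simp add: e assms sum.delta)
qed



lemma sum_delta_mult:
  assumes "m \<in> T" "finite T"
  shows "(\<Sum>m'\<in>T. (if m' = m then 1 else 0) * (L m' :: 'b::field)) = L m"
proof -
  have e: "(if m' = m then 1 else 0) * x = (if m' = m then x else 0)" for m' and x :: 'b by simp
  show ?thesis by (simp add: e assms sum.delta)
qed

lemma lex_lift:
  assumes "lexless k x y" "\<forall>j<k. u j = x j" "\<forall>j<k. v j = y j"
  shows "lexless (k+1) u v"
  using assms unfolding lexless_def by (metis less_SucI add.commute plus_1_eq_Suc less_trans)

lemma B_over:
  fixes V :: "('v, 'a::field) mpoly set"
  assumes "cols_indep V B" "finite B" "\<forall>p\<in>V. \<forall>m. \<not> Poly_Mapping.keys m \<subseteq> Y \<longrightarrow> Poly_Mapping.lookup p m = 0"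
    "m \<in> B"
  shows "Poly_Mapping.keys m \<subseteq> Y"
proof (rule ccontr)
  assume n: "\<not> Poly_Mapping.keys m \<subseteq> Y"
  have "(\<Sum>m'\<in>B. (\<lambda>m'. if m' = m then 1 else 0) m' * Poly_Mapping.lookup f m') = 0" if "f \<in> V" for f
    using sum_delta_mult[OF assms(4,2), of "Poly_Mapping.lookup f"] assms(3) n that by simp
  from assms(1)[unfolded cols_indep_def, rule_format, of "\<lambda>m'. if m' = m then (1::'a) else 0", OF this assms(4)]
  have "(\<lambda>m'. if m' = m then (1::'a) else 0) m = 0" .
  then show False by simp
qed

lemma vars_pspan:
  fixes S :: "('v, 'a::field) mpoly set"
  assumes "\<forall>f\<in>S. \<forall>m\<in>Poly_Mapping.keys f. Poly_Mapping.keys m \<subseteq> Y"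
  shows "\<forall>p\<in>pspan S. \<forall>m. \<not> Poly_Mapping.keys m \<subseteq> Y \<longrightarrow> Poly_Mapping.lookup p m = 0"
proof (intro ballI allI impI)
  fix p and m :: "'v \<Rightarrow>\<^sub>0 nat" assume p: "p \<in> pspan S" and n: "\<not> Poly_Mapping.keys m \<subseteq> Y"
  have "\<forall>f\<in>S. Poly_Mapping.lookup f m = 0"
    using assms n by (meson in_keys_iff)
  then show "Poly_Mapping.lookup p m = 0" using pspan_zero p by blast
qed


lemma indep_apply:
  assumes "cols_indep V B" "\<forall>f\<in>V. (\<Sum>m\<in>B. c m * Poly_Mapping.lookup f m) = 0" "m \<in> B"
  shows "c m = 0"
  using assms unfolding cols_indep_def by blast



theorem lemma5p4:
  fixes Y Z :: "'v set"
    and S1 S2 :: "('v, 'a::field) mpoly set"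
    and wt1 wt2 :: "'v \<Rightarrow> nat \<Rightarrow> nat"
    and w :: "'v \<Rightarrow> nat"
    and B1 B2 :: "('v \<Rightarrow>\<^sub>0 nat) set"
    and k :: nat
  assumes disj: "Y \<inter> Z = {}"
    and fin1: "finite S1" and fin2: "finite S2"
    and vars1: "\<forall>f\<in>S1. \<forall>m\<in>Poly_Mapping.keys f. Poly_Mapping.keys m \<subseteq> Y"
    and vars2: "\<forall>g\<in>S2. \<forall>m\<in>Poly_Mapping.keys g. Poly_Mapping.keys m \<subseteq> Z"
    and biwa1: "BIWA k wt1 (pspan S1) B1"
    and biwa2: "BIWA k wt2 (pspan S2) B2"
    and sep: "separates 1 (\<lambda>v j. w v) {m1 + m2 | m1 m2. m1 \<in> B1 \<and> m2 \<in> B2}"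
  shows "BIWA (k + 1)
           (\<lambda>v j. if j < k then (if v \<in> Y then wt1 v j else wt2 v j) else w v)
           (pspan {f * g | f g. f \<in> pspan S1 \<and> g \<in> pspan S2})
           {m1 + m2 | m1 m2. m1 \<in> B1 \<and> m2 \<in> B2}"
proof -
  define V1 where "V1 = pspan S1"
  define V2 where "V2 = pspan S2"
  define P where "P = {f * g | f g. f \<in> V1 \<and> g \<in> V2}"
  define V where "V = pspan P"
  define B where "B = {m1 + m2 | m1 m2. m1 \<in> B1 \<and> m2 \<in> B2}"
  define W where "W = (\<lambda>v j. if j < k then (if v \<in> Y then wt1 v j else wt2 v j) else w v)"
  define h where "h = (\<lambda>(a::'v \<Rightarrow>\<^sub>0 nat, b). a + b)"
  have fY: "\<forall>p\<in>V1. \<forall>m. \<not> Poly_Mapping.keys m \<subseteq> Y \<longrightarrow> Poly_Mapping.lookup p m = 0"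
    unfolding V1_def by (rule vars_pspan[OF vars1])
  have fZ: "\<forall>p\<in>V2. \<forall>m. \<not> Poly_Mapping.keys m \<subseteq> Z \<longrightarrow> Poly_Mapping.lookup p m = 0"
    unfolding V2_def by (rule vars_pspan[OF vars2])
  have finB1: "finite B1" and ind1: "cols_indep V1 B1" and sep1: "separates k wt1 B1"
    and str1: "\<And>m. m \<notin> B1 \<Longrightarrow> col_in_span V1 m {m'\<in>B1. lexless k (mwt wt1 m') (mwt wt1 m)}"
    using biwa1 unfolding BIWA_def cols_basis_def V1_def by auto
  have finB2: "finite B2" and ind2: "cols_indep V2 B2" and sep2: "separates k wt2 B2"
    and str2: "\<And>m. m \<notin> B2 \<Longrightarrow> col_in_span V2 m {m'\<in>B2. lexless k (mwt wt2 m') (mwt wt2 m)}"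
    using biwa2 unfolding BIWA_def cols_basis_def V2_def by auto
  have B1Y: "Poly_Mapping.keys a \<subseteq> Y" if "a \<in> B1" for a
    using B_over[OF ind1 finB1 fY that] .
  have B2Z: "Poly_Mapping.keys b \<subseteq> Z" if "b \<in> B2" for b
    using B_over[OF ind2 finB2 fZ that] .
  have Bh: "B = h ` (B1 \<times> B2)" unfolding B_def h_def by auto
  have finB: "finite B" unfolding Bh using finB1 finB2 by simp
  have injh: "inj_on h (B1 \<times> B2)"
  proof (rule inj_onI)
    fix x y assume "x \<in> B1 \<times> B2" "y \<in> B1 \<times> B2" "h x = h y"
    then obtain a b a' b' where "x = (a, b)" "y = (a', b')" "a \<in> B1" "b \<in> B2" "a' \<in> B1" "b' \<in> B2" "a + b = a' + b'"
      unfolding h_def by auto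
    then show "x = y" using decomp_unique[OF disj B1Y B1Y B2Z B2Z] by blast
  qed
  have prodc: "Poly_Mapping.lookup (f * g) (a + b) = Poly_Mapping.lookup f a * Poly_Mapping.lookup g b"
    if "f \<in> V1" "g \<in> V2" "Poly_Mapping.keys a \<subseteq> Y" "Poly_Mapping.keys b \<subseteq> Z" for f g a b
    using prod_coeff(1)[OF disj, of f g a b] fY fZ that by blast
  have prodz: "Poly_Mapping.lookup (f * g) m = 0"
    if "f \<in> V1" "g \<in> V2" "\<not> (\<exists>a b. m = a + b \<and> Poly_Mapping.keys a \<subseteq> Y \<and> Poly_Mapping.keys b \<subseteq> Z)" for f g m
    using prod_coeff(2)[OF disj, of f g m] fY fZ that by blast
  have PV: "f * g \<in> V" if "f \<in> V1" "g \<in> V2" for f g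
    unfolding V_def P_def by (rule pspan_sup) (use that in blast)
  have mwtW: "mwt W (a + b) j = mwt wt1 a j + mwt wt2 b j"
    if "Poly_Mapping.keys a \<subseteq> Y" "Poly_Mapping.keys b \<subseteq> Z" "j < k" for a b j
  proof -
    have "mwt W a j = mwt wt1 a j" unfolding mwt_def W_def
      by (rule sum.cong) (use that in auto)
    moreover have "mwt W b j = mwt wt2 b j" unfolding mwt_def W_def
      by (rule sum.cong) (use that disj in auto)
    ultimately show ?thesis by (simp add: mwt_add)
  qed
  have mwtk: "mwt W m k = mwt (\<lambda>v j. w v) m 0" for m
    unfolding mwt_def W_def by simp
  have sepB: "separates (k + 1) W B"
    unfolding separates_def
  proof (intro ballI impI)
    fix m m' assume "m \<in> B" "m' \<in> B" "m \<noteq> m'"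
    then have "\<not> veq 1 (mwt (\<lambda>v j. w v) m) (mwt (\<lambda>v j. w v) m')"
      using sep unfolding separates_def B_def by blast
    then have "mwt W m k \<noteq> mwt W m' k" unfolding veq_def mwtk by simp
    then show "\<not> veq (k + 1) (mwt W m) (mwt W m')" unfolding veq_def by auto
  qed
  have indB: "cols_indep V B"
    unfolding cols_indep_def
  proof (intro allI impI ballI)
    fix c m assume hc: "\<forall>f\<in>V. (\<Sum>m\<in>B. c m * Poly_Mapping.lookup f m) = 0" and mB: "m \<in> B"
    obtain a0 b0 where ab0: "m = a0 + b0" "a0 \<in> B1" "b0 \<in> B2" using mB unfolding B_def by blast
    have key: "(\<Sum>a\<in>B1. (\<lambda>a. \<Sum>b\<in>B2. c (a + b) * Poly_Mapping.lookup g b) a * Poly_Mapping.lookup f a) = 0"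
      if f: "f \<in> V1" and g: "g \<in> V2" for f g
    proof -
      have "0 = (\<Sum>m\<in>B. c m * Poly_Mapping.lookup (f * g) m)" using hc PV[OF f g] by simp
      also have "\<dots> = (\<Sum>x\<in>B1 \<times> B2. c (h x) * Poly_Mapping.lookup (f * g) (h x))"
        unfolding Bh by (rule sum.reindex[OF injh, unfolded comp_def])
      also have "\<dots> = (\<Sum>a\<in>B1. \<Sum>b\<in>B2. c (a + b) * Poly_Mapping.lookup (f * g) (a + b))"
        unfolding h_def sum.cartesian_product by (intro sum.cong refl) auto
      also have "\<dots> = (\<Sum>a\<in>B1. \<Sum>b\<in>B2. c (a + b) * Poly_Mapping.lookup g b * Poly_Mapping.lookup f a)"
        by (intro sum.cong refl) (simp add: prodc[OF f g B1Y B2Z] mult_ac)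
      also have "\<dots> = (\<Sum>a\<in>B1. (\<lambda>a. \<Sum>b\<in>B2. c (a + b) * Poly_Mapping.lookup g b) a * Poly_Mapping.lookup f a)"
        by (simp add: sum_distrib_right)
      finally show ?thesis by simp
    qed
    have "(\<Sum>b\<in>B2. (\<lambda>b. c (a0 + b)) b * Poly_Mapping.lookup g b) = 0" if g: "g \<in> V2" for g
    proof -
      have "\<forall>f\<in>V1. (\<Sum>a\<in>B1. (\<lambda>a. \<Sum>b\<in>B2. c (a + b) * Poly_Mapping.lookup g b) a * Poly_Mapping.lookup f a) = 0"
        using key g by blast
      from indep_apply[where c="\<lambda>a. \<Sum>b\<in>B2. c (a + b) * Poly_Mapping.lookup g b", OF ind1 this ab0(2)] show ?thesis by simp
    qed
    then have "\<forall>g\<in>V2. (\<Sum>b\<in>B2. (\<lambda>b. c (a0 + b)) b * Poly_Mapping.lookup g b) = 0" by blast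
    from indep_apply[where c="\<lambda>b. c (a0 + b)", OF ind2 this ab0(3)]
    show "c m = 0" using ab0(1) by simp
  qed
  have gen: "col_in_span V m {m'\<in>B. m' = m \<or> lexless (k + 1) (mwt W m') (mwt W m)}" for m
  proof -
    let ?G = "{m'\<in>B. m' = m \<or> lexless (k + 1) (mwt W m') (mwt W m)}"
    have finG: "finite ?G" using finB by simp
    show ?thesis
    proof (cases "\<exists>a b. m = a + b \<and> Poly_Mapping.keys a \<subseteq> Y \<and> Poly_Mapping.keys b \<subseteq> Z")
      case False
      have "\<forall>p\<in>P. Poly_Mapping.lookup p m = 0" unfolding P_def using prodz[OF _ _ False] by blast
      then have "\<forall>p\<in>V. Poly_Mapping.lookup p m = 0" unfolding V_def using pspan_zero by blast
      then have "col_in_span V m {}" unfolding col_in_span_def by simp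
      then show ?thesis by (rule col_mono) (use finG in auto)
    next
      case True
      then obtain a b where ab: "m = a + b" "Poly_Mapping.keys a \<subseteq> Y" "Poly_Mapping.keys b \<subseteq> Z" by blast
      define T1 where "T1 = {a'\<in>B1. a' = a \<or> lexless k (mwt wt1 a') (mwt wt1 a)}"
      define T2 where "T2 = {b'\<in>B2. b' = b \<or> lexless k (mwt wt2 b') (mwt wt2 b)}"
      have finT1: "finite T1" unfolding T1_def using finB1 by simp
      have finT2: "finite T2" unfolding T2_def using finB2 by simp
      have "col_in_span V1 a T1"
      proof (cases "a \<in> B1")
        case True then show ?thesis by (intro col_self finT1) (simp add: T1_def)
      next
        case False show ?thesis by (rule col_mono[OF str1[OF False] _ finT1]) (auto simp: T1_def)
      qed
      then obtain c1 where c1: "\<forall>f\<in>V1. Poly_Mapping.lookup f a = (\<Sum>a'\<in>T1. c1 a' * Poly_Mapping.lookup f a')"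
        unfolding col_in_span_def by blast
      have "col_in_span V2 b T2"
      proof (cases "b \<in> B2")
        case True then show ?thesis by (intro col_self finT2) (simp add: T2_def)
      next
        case False show ?thesis by (rule col_mono[OF str2[OF False] _ finT2]) (auto simp: T2_def)
      qed
      then obtain c2 where c2: "\<forall>g\<in>V2. Poly_Mapping.lookup g b = (\<Sum>b'\<in>T2. c2 b' * Poly_Mapping.lookup g b')"
        unfolding col_in_span_def by blast
      have sub: "T1 \<times> T2 \<subseteq> B1 \<times> B2" unfolding T1_def T2_def by auto
      have injT: "inj_on h (T1 \<times> T2)" using injh sub by (rule inj_on_subset)
      define C where "C = (\<lambda>m'. case the_inv_into (T1 \<times> T2) h m' of (a', b') \<Rightarrow> c1 a' * c2 b')"
      have Ch: "C (h x) = (case x of (a', b') \<Rightarrow> c1 a' * c2 b')" if "x \<in> T1 \<times> T2" for x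
        unfolding C_def using the_inv_into_f_f[OF injT that] by simp
      have Ch': "C (a' + b') = c1 a' * c2 b'" if "a' \<in> T1" "b' \<in> T2" for a' b'
        using Ch[of "(a', b')"] that unfolding h_def by simp
      have rel: "\<forall>p\<in>P. (\<Sum>m'\<in>{m}. (\<lambda>_. 1) m' * Poly_Mapping.lookup p m') = (\<Sum>m'\<in>h ` (T1 \<times> T2). C m' * Poly_Mapping.lookup p m')"
      proof
        fix p assume "p \<in> P"
        then obtain f g where fg: "p = f * g" "f \<in> V1" "g \<in> V2" unfolding P_def by blast
        have "(\<Sum>m'\<in>{m}. (\<lambda>_. 1) m' * Poly_Mapping.lookup p m') = Poly_Mapping.lookup f a * Poly_Mapping.lookup g b"
          using prodc[OF fg(2,3) ab(2,3)] ab(1) fg(1) by simp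
        also have "\<dots> = (\<Sum>a'\<in>T1. c1 a' * Poly_Mapping.lookup f a') * (\<Sum>b'\<in>T2. c2 b' * Poly_Mapping.lookup g b')"
          using c1 c2 fg by simp
        also have "\<dots> = (\<Sum>a'\<in>T1. \<Sum>b'\<in>T2. (c1 a' * c2 b') * Poly_Mapping.lookup (f * g) (a' + b'))"
          unfolding sum_product
        proof (intro sum.cong refl)
          fix a' b' assume "a' \<in> T1" "b' \<in> T2"
          then have "a' \<in> B1" "b' \<in> B2" unfolding T1_def T2_def by auto
          then show "c1 a' * Poly_Mapping.lookup f a' * (c2 b' * Poly_Mapping.lookup g b') = (c1 a' * c2 b') * Poly_Mapping.lookup (f * g) (a' + b')"
            using prodc[OF fg(2,3) B1Y B2Z] by (simp add: mult_ac)
        qed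
        also have "\<dots> = (\<Sum>x\<in>T1 \<times> T2. C (h x) * Poly_Mapping.lookup p (h x))"
          unfolding sum.cartesian_product fg(1)
          by (intro sum.cong refl) (auto simp: Ch' h_def)
        also have "\<dots> = (\<Sum>m'\<in>h ` (T1 \<times> T2). C m' * Poly_Mapping.lookup p m')"
          by (rule sum.reindex[OF injT, unfolded comp_def, symmetric])
        finally show "(\<Sum>m'\<in>{m}. (\<lambda>_. 1) m' * Poly_Mapping.lookup p m') = (\<Sum>m'\<in>h ` (T1 \<times> T2). C m' * Poly_Mapping.lookup p m')" .
      qed
      have "\<forall>p\<in>V. (\<Sum>m'\<in>{m}. (\<lambda>_. 1) m' * Poly_Mapping.lookup p m') = (\<Sum>m'\<in>h ` (T1 \<times> T2). C m' * Poly_Mapping.lookup p m')"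
        unfolding V_def by (rule pspan_lin[OF rel])
      then have "col_in_span V m (h ` (T1 \<times> T2))" unfolding col_in_span_def by auto
      moreover have "h ` (T1 \<times> T2) \<subseteq> ?G"
      proof
        fix x assume "x \<in> h ` (T1 \<times> T2)"
        then obtain a' b' where x: "x = a' + b'" "a' \<in> T1" "b' \<in> T2" unfolding h_def by auto
        have a'B: "a' \<in> B1" and b'B: "b' \<in> B2" using x unfolding T1_def T2_def by auto
        have xB: "x \<in> B" using x a'B b'B unfolding B_def by blast
        show "x \<in> ?G"
        proof (cases "a' = a \<and> b' = b")
          case True then show ?thesis using xB x ab by simp
        next
          case False
          have la: "a' = a \<or> lexless k (mwt wt1 a') (mwt wt1 a)" using x unfolding T1_def by auto
          have lb: "b' = b \<or> lexless k (mwt wt2 b') (mwt wt2 b)" using x unfolding T2_def by auto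
          have "lexless k (\<lambda>j. mwt wt1 a' j + mwt wt2 b' j) (\<lambda>j. mwt wt1 a j + mwt wt2 b j)"
            using la lb False lex_add1 lex_add1' lex_add2 by metis
          then have "lexless (k + 1) (mwt W x) (mwt W m)"
            by (rule lex_lift) (use x ab mwtW B1Y[OF a'B] B2Z[OF b'B] in auto)
          then show ?thesis using xB by simp
        qed
      qed
      ultimately show ?thesis by (rule col_mono) (rule finG)
    qed
  qed
  have basis: "cols_basis V B"
    unfolding cols_basis_def
  proof (intro conjI allI finB indB)
    fix m show "col_in_span V m B" by (rule col_mono[OF gen]) (auto simp: finB)
  qed
  have strict: "col_in_span V m {m'\<in>B. lexless (k + 1) (mwt W m') (mwt W m)}" if "m \<notin> B" for m
  proof -
    have "{m'\<in>B. m' = m \<or> lexless (k + 1) (mwt W m') (mwt W m)} = {m'\<in>B. lexless (k + 1) (mwt W m') (mwt W m)}"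
      using that by auto
    then show ?thesis using gen[of m] by simp
  qed
  show ?thesis
    using basis sepB strict
    unfolding BIWA_def V_def P_def V1_def V2_def B_def W_def by blast
qed


end
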